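(* Let $A,B\subseteq\mathbb{R}^n$ be nonempty closed sets and let $\lambda>0$, $\lambda\neq1$. Let $M_{A,B,\lambda}=\{p\in\mathbb{R}^n: p\notin A\cup B,\ d(p,A)=\lambda\, d(p,B)\}$. Then $\mu(M_{A,B,\lambda})=0$.
   Context: $\mu$ is $n$-dimensional Lebesgue measure and $d(q,E)=\min_{e\in E}\|q-e\|$ is the Euclidean distance from a point to a closed set. *)

theory Defs
  imports "HOL-Analysis.Analysis"
begin

end

theory Submission
  imports Defs
begin


lemma key_ineq:
  fixes p q a :: "'a::euclidean_space"
  assumes lam: "0 \<le> lam" "lam < 1" and aA: "a \<in> A" and pa: "dist p a = infdist p A"
    and hp: "infdist p A = lam * infdist p B" and hq: "infdist q A = lam * infdist q B"
    and small: "norm (q - p) \<le> infdist p A"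
  shows "(a - p) \<bullet> (q - p) \<le> lam * norm (a - p) * norm (q - p) + (norm (q - p))^2 / 2"
proof -
  define h where "h = q - p"
  define z where "z = a - p"
  define \<alpha> where "\<alpha> = norm z"
  have az: "dist p a = \<alpha>" by (simp add: \<alpha>_def z_def dist_norm norm_minus_commute)
  have 1: "infdist q A \<le> dist q a" by (rule infdist_le[OF aA])
  have 2: "infdist p B \<le> infdist q B + dist p q" by (rule infdist_triangle)
  have dpq: "dist p q = norm h" by (simp add: h_def dist_norm norm_minus_commute)
  have "\<alpha> = lam * infdist p B" using az pa hp by simp
  also have "\<dots> \<le> lam * infdist q B + lam * norm h" using mult_left_mono[OF 2 lam(1)] dpq by (simp add: algebra_simps)
  also have "\<dots> \<le> dist q a + lam * norm h" using 1 hq by simp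
  finally have 3: "\<alpha> - lam * norm h \<le> dist q a" by simp
  have "lam * norm h \<le> 1 * norm h" using lam by (intro mult_right_mono) auto
  then have nn: "0 \<le> \<alpha> - lam * norm h" using small az pa h_def by simp
  have "(\<alpha> - lam * norm h)^2 \<le> (dist q a)^2" using 3 nn by (simp add: power_mono)
  also have "(dist q a)^2 = (norm h)^2 - 2 * (z \<bullet> h) + \<alpha>^2"
    by (simp add: dist_norm h_def z_def \<alpha>_def power2_norm_eq_inner algebra_simps inner_commute)
  finally have 4: "(\<alpha> - lam * norm h)^2 \<le> (norm h)^2 - 2 * (z \<bullet> h) + \<alpha>^2" .
  have aux: "lam^2 * (norm h)^2 \<ge> 0" by simp
  have 5: "z \<bullet> h * 2 + lam^2 * (norm h)^2 \<le> (norm h)^2 + \<alpha> * (lam * (norm h * 2))"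
    using 4 by (simp add: power2_diff algebra_simps)
  then have "2 * (z \<bullet> h) \<le> 2 * lam * \<alpha> * norm h + (norm h)^2"
    using aux by (simp add: algebra_simps, linarith)
  then show ?thesis by (simp add: h_def z_def \<alpha>_def algebra_simps)
qed

lemma geo:
  fixes z h e :: "'a::euclidean_space"
  assumes e: "norm e = 1" and d: "0 < \<delta>" "\<delta> \<le> norm z" and th: "\<theta> * norm z \<le> z \<bullet> e"
    and zh: "z \<bullet> h \<le> lam * norm z * norm h + (norm h)^2/2"
    and hs: "norm h \<le> \<eta> * \<delta>" and s0: "0 \<le> h \<bullet> e" and thd: "\<theta> = lam + \<eta>"
    and et: "0 < \<eta>" and l: "0 \<le> lam" "lam + \<eta>/2 \<le> 1"
  shows "h \<bullet> e \<le> (4/\<eta>) * norm (h - (h \<bullet> e) *\<^sub>R e)"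
proof -
  define s where "s = h \<bullet> e"
  define w where "w = h - s *\<^sub>R e"
  have hw: "h = s *\<^sub>R e + w" by (simp add: w_def)
  have zh2: "z \<bullet> h = s * (z \<bullet> e) + z \<bullet> w" by (simp add: hw inner_add_right)
  have zw: "- (norm z * norm w) \<le> z \<bullet> w" using Cauchy_Schwarz_ineq2[of z w] by linarith
  have ns: "norm (s *\<^sub>R e) = s" using s0 e by (simp add: s_def)
  have hn: "norm h \<le> s + norm w"
    using norm_triangle_ineq[of "s *\<^sub>R e" w] unfolding ns hw[symmetric] .
  have zpos: "0 < norm z" using d by linarith
  have "norm h \<le> \<eta> * norm z" using hs d et by (meson mult_left_mono less_imp_le order_trans)
  moreover have "0 \<le> s + norm w" using s0 by (simp add: s_def)
  ultimately have "(norm h)^2 \<le> (s + norm w) * (\<eta> * norm z)"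
    unfolding power2_eq_square by (intro mult_mono[OF hn]) auto
  then have h2: "(norm h)^2/2 \<le> norm z * (\<eta>/2 * (s + norm w))" by (simp add: algebra_simps)
  have "lam * norm z * norm h \<le> lam * norm z * (s + norm w)"
    using hn l by (simp add: mult_left_mono)
  have se: "s * (\<theta> * norm z) \<le> s * (z \<bullet> e)" using th s0 s_def by (simp add: mult_left_mono)
  have eq1: "norm z * (s * \<theta> - norm w) = s * (\<theta> * norm z) - norm z * norm w" by (simp add: algebra_simps)
  have eq2: "norm z * ((lam + \<eta>/2) * (s + norm w)) = lam * norm z * (s + norm w) + norm z * (\<eta>/2 * (s + norm w))"
    by (simp add: algebra_simps)
  have "norm z * (s * \<theta> - norm w) \<le> norm z * ((lam + \<eta>/2) * (s + norm w))"
    unfolding eq1 eq2 using zh zh2 zw h2 se \<open>lam * norm z * norm h \<le> _\<close> by linarith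
  then have "s * \<theta> - norm w \<le> (lam + \<eta>/2) * (s + norm w)" using zpos by simp
  then have 5: "s * (\<eta>/2) \<le> (1 + lam + \<eta>/2) * norm w"
  proof -
    assume a: "s * \<theta> - norm w \<le> (lam + \<eta>/2) * (s + norm w)"
    have e1: "s * \<theta> = s * lam + s * \<eta>" using thd by (simp add: algebra_simps)
    have e2: "(lam + \<eta>/2) * (s + norm w) = s * lam + s * (\<eta>/2) + lam * norm w + \<eta>/2 * norm w"
      by (simp add: algebra_simps)
    have e3: "(1 + lam + \<eta>/2) * norm w = norm w + lam * norm w + \<eta>/2 * norm w" by (simp add: algebra_simps)
    have e4: "s * \<eta> = 2 * (s * (\<eta>/2))" by simp
    show ?thesis using a unfolding e1 e2 e3 e4 by linarith
  qed
  have "(1 + lam + \<eta>/2) * norm w \<le> 2 * norm w" using l by (simp add: mult_right_mono)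
  with 5 have "s * \<eta> \<le> 4 * norm w" by simp
  then show ?thesis using et by (simp add: s_def[symmetric] w_def[symmetric] field_simps)
qed

lemma piece_half:
  fixes p q a e :: "'a::euclidean_space"
  assumes lam: "0 \<le> lam" "lam < 1" and et: "\<eta> = (1 - lam)/2" and th: "\<theta> = lam + \<eta>"
    and e: "norm e = 1" and d: "0 < \<delta>"
    and hp: "infdist p A = lam * infdist p B" and aA: "a \<in> A" and pa: "dist p a = infdist p A"
    and ca: "\<theta> * norm (a - p) \<le> (a - p) \<bullet> e" and dp: "\<delta> \<le> infdist p A"
    and hq: "infdist q A = lam * infdist q B"
    and sm: "norm (q - p) \<le> \<eta> * \<delta>" and s0: "0 \<le> (q - p) \<bullet> e"
  shows "(q - p) \<bullet> e \<le> (4/\<eta>) * norm ((q - p) - ((q - p) \<bullet> e) *\<^sub>R e)"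
proof -
  have etp: "0 < \<eta>" "\<eta> \<le> 1" using lam et by auto
  have "\<eta> * \<delta> \<le> 1 * \<delta>" using etp d by (intro mult_right_mono) auto
  then have sm2: "norm (q - p) \<le> infdist p A" using sm dp by linarith
  have k: "(a - p) \<bullet> (q - p) \<le> lam * norm (a - p) * norm (q - p) + (norm (q - p))^2 / 2"
    by (rule key_ineq[OF lam aA pa hp hq sm2])
  have nz: "norm (a - p) = infdist p A" using pa by (simp add: dist_norm norm_minus_commute)
  show ?thesis
  proof (rule geo[OF e d(1) _ ca k sm s0 th etp(1) lam(1)])
    show "\<delta> \<le> norm (a - p)" using nz dp by simp
    show "lam + \<eta> / 2 \<le> 1" using et lam by simp
  qed
qed

lemma piece_lip:
  fixes p q a a' e :: "'a::euclidean_space"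
  assumes lam: "0 \<le> lam" "lam < 1" and et: "\<eta> = (1 - lam)/2" and th: "\<theta> = lam + \<eta>"
    and e: "norm e = 1" and d: "0 < \<delta>"
    and hp: "infdist p A = lam * infdist p B" and aA: "a \<in> A" and pa: "dist p a = infdist p A"
    and ca: "\<theta> * norm (a - p) \<le> (a - p) \<bullet> e" and dp: "\<delta> \<le> infdist p A"
    and hq: "infdist q A = lam * infdist q B" and aA': "a' \<in> A" and qa: "dist q a' = infdist q A"
    and ca': "\<theta> * norm (a' - q) \<le> (a' - q) \<bullet> e" and dq: "\<delta> \<le> infdist q A"
    and sm: "norm (q - p) \<le> \<eta> * \<delta>"
  shows "norm (q - p) \<le> (1 + 4/\<eta>) * norm ((q - p) - ((q - p) \<bullet> e) *\<^sub>R e)"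
proof -
  define h where "h = q - p"
  define s where "s = h \<bullet> e"
  define w where "w = h - s *\<^sub>R e"
  have etp: "0 < \<eta>" using lam et by auto
  have "\<bar>s\<bar> \<le> (4/\<eta>) * norm w"
  proof (cases "0 \<le> s")
    case True
    then show ?thesis using piece_half[OF lam et th e d hp aA pa ca dp hq sm] by (simp add: s_def w_def h_def)
  next
    case False
    have sm': "norm (p - q) \<le> \<eta> * \<delta>" using sm by (simp add: norm_minus_commute)
    have s0: "0 \<le> (p - q) \<bullet> e" using False by (simp add: s_def h_def inner_diff_left)
    have "(p - q) \<bullet> e \<le> (4/\<eta>) * norm ((p - q) - ((p - q) \<bullet> e) *\<^sub>R e)"
      by (rule piece_half[OF lam et th e d hq aA' qa ca' dq hp sm' s0])
    moreover have "(p - q) - ((p - q) \<bullet> e) *\<^sub>R e = - w"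
      by (simp add: w_def s_def h_def algebra_simps inner_diff_left)
    moreover have "(p - q) \<bullet> e = - s" by (simp add: s_def h_def inner_diff_left)
    ultimately show ?thesis using False by simp
  qed
  moreover have "norm h \<le> \<bar>s\<bar> + norm w"
  proof -
    have "h = s *\<^sub>R e + w" by (simp add: w_def)
    then have "norm h \<le> norm (s *\<^sub>R e) + norm w" by (metis norm_triangle_ineq)
    then show ?thesis using e by simp
  qed
  ultimately have "norm h \<le> (1 + 4/\<eta>) * norm w" by (simp add: algebra_simps)
  then show ?thesis by (simp add: h_def s_def w_def)
qed

lemma main_lt1:
  fixes A B :: "'a::euclidean_space set" and lam :: real
  assumes cA: "closed A" and neA: "A \<noteq> {}" and lam: "0 \<le> lam" "lam < 1"
  shows "negligible {p. p \<notin> A \<union> B \<and> infdist p A = lam * infdist p B}"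
proof -
  define M where "M = {p. p \<notin> A \<union> B \<and> infdist p A = lam * infdist p B}"
  define \<eta> where "\<eta> = (1 - lam)/2"
  define \<theta> where "\<theta> = lam + \<eta>"
  define C where "C = 1 + 4/\<eta>"
  have etp: "0 < \<eta>" using lam by (simp add: \<eta>_def)
  have th1: "\<theta> < 1" using lam unfolding \<theta>_def \<eta>_def by (simp add: field_simps)
  define piece where "piece = (\<lambda>(v::'a, k::nat, c::'a). {p\<in>M. v \<noteq> 0 \<and>
      (\<exists>a\<in>A. dist p a = infdist p A \<and> \<theta> * norm (a - p) \<le> (a - p) \<bullet> (v /\<^sub>R norm v)) \<and>
      1 / real (Suc k) \<le> infdist p A \<and> dist p c < \<eta> / real (Suc k) / 2})"
  obtain D :: "'a set" where D: "countable D" "\<And>X. open X \<Longrightarrow> X \<noteq> {} \<Longrightarrow> \<exists>d\<in>D. d \<in> X"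
    using countable_dense_setE by blast
  have neg: "negligible (piece (v, k, c))" for v k c
  proof (cases "v = 0")
    case True
    then show ?thesis by (simp add: piece_def)
  next
    case False
    define e where "e = v /\<^sub>R norm v"
    have e1: "norm e = 1" using False by (simp add: e_def)
    have ee: "e \<bullet> e = 1" using e1 by (simp add: dot_square_norm)
    define P where "P = (\<lambda>x. x - (x \<bullet> e) *\<^sub>R e)"
    have Pd: "P q - P p = P (q - p)" for p q by (simp add: P_def algebra_simps inner_diff_left)
    define \<delta> where "\<delta> = 1 / real (Suc k)"
    have dpos: "0 < \<delta>" by (simp add: \<delta>_def)
    have lip: "norm (q - p) \<le> C * norm (P q - P p)" if p: "p \<in> piece (v,k,c)" and q: "q \<in> piece (v,k,c)" for p q
    proof -
      from p obtain a where pM: "p \<in> M" and aA: "a \<in> A" and pa: "dist p a = infdist p A"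
          and ca: "\<theta> * norm (a - p) \<le> (a - p) \<bullet> e" and dp: "\<delta> \<le> infdist p A"
          and pc: "dist p c < \<eta> / real (Suc k) / 2"
        by (auto simp: piece_def e_def \<delta>_def)
      from q obtain a' where qM: "q \<in> M" and aA': "a' \<in> A" and qa: "dist q a' = infdist q A"
          and ca': "\<theta> * norm (a' - q) \<le> (a' - q) \<bullet> e" and dq: "\<delta> \<le> infdist q A"
          and qc: "dist q c < \<eta> / real (Suc k) / 2"
        by (auto simp: piece_def e_def \<delta>_def)
      have hp: "infdist p A = lam * infdist p B" using pM by (simp add: M_def)
      have hq: "infdist q A = lam * infdist q B" using qM by (simp add: M_def)
      have "dist q p \<le> dist q c + dist p c" by (metis dist_commute dist_triangle)
      moreover have hh: "\<eta> * \<delta> = \<eta> / real (Suc k) / 2 + \<eta> / real (Suc k) / 2" 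
        unfolding \<delta>_def field_sum_of_halves by simp
      ultimately have "dist q p \<le> \<eta> * \<delta>" using pc qc by linarith
      then have sm: "norm (q - p) \<le> \<eta> * \<delta>" by (simp add: dist_norm)
      show ?thesis unfolding Pd unfolding P_def C_def
        by (rule piece_lip[OF lam \<eta>_def \<theta>_def e1 dpos hp aA pa ca dp hq aA' qa ca' dq sm])
    qed
    define S where "S = P ` piece (v,k,c)"
    define f where "f = (\<lambda>y. SOME p. p \<in> piece (v,k,c) \<and> P p = y)"
    have fS: "f y \<in> piece (v,k,c) \<and> P (f y) = y" if "y \<in> S" for y
    proof -
      have "\<exists>p. p \<in> piece (v,k,c) \<and> P p = y" using that by (auto simp: S_def)
      then show ?thesis unfolding f_def by (rule someI_ex)
    qed
    have sub: "piece (v,k,c) \<subseteq> f ` S"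
    proof
      fix p assume p: "p \<in> piece (v,k,c)"
      have y: "P p \<in> S" using p by (simp add: S_def)
      have f1: "f (P p) \<in> piece (v,k,c)" and f2: "P (f (P p)) = P p" using fS[OF y] by auto
      have "norm (f (P p) - p) \<le> C * norm (P (f (P p)) - P p)" by (rule lip[OF p f1])
      then have "f (P p) = p" unfolding f2 by simp
      then show "p \<in> f ` S" using y by force
    qed
    have "S \<subseteq> {x. e \<bullet> x = 0}"
      by (auto simp: S_def P_def inner_diff_right ee inner_commute)
    moreover have "negligible {x. e \<bullet> x = 0}" using e1 by (intro negligible_hyperplane) auto
    ultimately have nS: "negligible S" by (rule negligible_subset[rotated])
    have "negligible (f ` S)"
    proof (rule negligible_locally_Lipschitz_image[OF order_refl nS])
      fix x assume x: "x \<in> S"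
      show "\<exists>T B. open T \<and> x \<in> T \<and> (\<forall>y\<in>S \<inter> T. norm (f y - f x) \<le> B * norm (y - x))"
      proof (intro exI conjI ballI)
        fix y assume "y \<in> S \<inter> UNIV"
        then have y: "y \<in> S" by simp
        have x1: "f x \<in> piece (v,k,c)" and x2: "P (f x) = x" using fS[OF x] by auto
        have y1: "f y \<in> piece (v,k,c)" and y2: "P (f y) = y" using fS[OF y] by auto
        show "norm (f y - f x) \<le> C * norm (y - x)" using lip[OF x1 y1] unfolding x2 y2 .
      qed auto
    qed
    then show ?thesis using sub by (rule negligible_subset)
  qed
  have cov: "M \<subseteq> \<Union> (piece ` (D \<times> UNIV \<times> D))"
  proof
    fix p assume pM: "p \<in> M"
    then have pA: "p \<notin> A" by (simp add: M_def)
    have apos: "0 < infdist p A"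
      using pA in_closed_iff_infdist_zero[OF cA neA] infdist_nonneg[of p A] by fastforce
    obtain a where aA: "a \<in> A" and amin: "\<And>y. y \<in> A \<Longrightarrow> dist p a \<le> dist p y"
      using distance_attains_inf[OF cA neA] by blast
    have pa: "dist p a = infdist p A"
    proof -
      have "dist p a \<le> infdist p A" unfolding infdist_notempty[OF neA] by (rule cINF_greatest[OF neA amin])
      then show ?thesis using infdist_le[OF aA, of p] by linarith
    qed
    obtain k where k: "inverse (real (Suc k)) < infdist p A" using reals_Archimedean[OF apos] by blast
    define z where "z = a - p"
    have nz: "norm z = infdist p A" using pa by (simp add: z_def dist_norm norm_minus_commute)
    have zpos: "0 < norm z" using nz apos by simp
    define X where "X = {v. \<theta> * norm v * norm z < z \<bullet> v}"
    have "open X" unfolding X_def by (intro open_Collect_less continuous_intros)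
    moreover have "z \<in> X"
    proof -
      have "\<theta> * norm z * norm z < 1 * norm z * norm z"
        using th1 zpos by (intro mult_strict_right_mono) auto
      then show ?thesis by (simp add: X_def dot_square_norm power2_eq_square)
    qed
    ultimately obtain v where vD: "v \<in> D" and vX: "v \<in> X" using D(2) by blast
    have v0: "v \<noteq> 0" using vX by (auto simp: X_def)
    have "\<theta> * norm z \<le> z \<bullet> (v /\<^sub>R norm v)"
      using vX v0 by (simp add: X_def inner_scaleR_right field_simps)
    obtain c where cD: "c \<in> D" and cb: "c \<in> ball p (\<eta> / real (Suc k) / 2)"
    proof -
      have "0 < \<eta> / real (Suc k) / 2" using etp by simp
      then have "ball p (\<eta> / real (Suc k) / 2) \<noteq> {}" by simp
      then show ?thesis using D(2)[of "ball p (\<eta> / real (Suc k) / 2)"] that by blast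
    qed
    have "p \<in> piece (v, k, c)"
      unfolding piece_def using pM v0 aA pa \<open>\<theta> * norm z \<le> _\<close> k cb
      by (auto simp: z_def dist_commute inverse_eq_divide)
    then show "p \<in> \<Union> (piece ` (D \<times> UNIV \<times> D))" using vD cD by blast
  qed
  have "negligible (\<Union> (piece ` (D \<times> UNIV \<times> D)))"
    by (rule negligible_countable_Union) (use D(1) neg in auto)
  then show ?thesis using cov unfolding M_def by (rule negligible_subset)
qed


theorem mainTheorem2:
  fixes A B :: "(real ^ 'n) set" and lam :: real
  assumes "closed A" "closed B" "A \<noteq> {}" "B \<noteq> {}"
    and "lam > 0" "lam \<noteq> 1"
  shows "{p. p \<notin> A \<union> B \<and> infdist p A = lam * infdist p B} \<in> null_sets lebesgue"
proof -
  have "negligible {p. p \<notin> A \<union> B \<and> infdist p A = lam * infdist p B}"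
  proof (cases "lam < 1")
    case True
    then show ?thesis using main_lt1[OF assms(1,3)] assms(5) by simp
  next
    case False
    then have l1: "1 < lam" using assms(6) by simp
    have "0 \<le> 1/lam" "1/lam < 1" using l1 by auto
    from main_lt1[OF assms(2,4) this, of A]
    have n: "negligible {p. p \<notin> B \<union> A \<and> infdist p B = 1/lam * infdist p A}" .
    have "{p. p \<notin> A \<union> B \<and> infdist p A = lam * infdist p B} = {p. p \<notin> B \<union> A \<and> infdist p B = 1/lam * infdist p A}"
      using l1 by (auto simp: field_simps)
    then show ?thesis using n by simp
  qed
  then show ?thesis by (simp add: negligible_iff_null_sets)
qed

end
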